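(* Let $r\ge 2$ be an integer and let $G$ be a disconnected $r$-regular graph with $n$ vertices. Suppose $$\mathrm{Spec}_Q(G)=\{[2r]^{s'},\ [0]^{s-s'},\ [r+1]^{a},\ [r-1]^{b}\},$$ where $a,b,s,s'$ are non-negative integers with $n=s+a+b$ and $s>s'>1$. Then $a=r(s-s')$, $b=rs'$, $r=\frac ns-1$, and $$G\cong gK_{r+1}\ \cup\ h\,(K_{r+1,r+1}\setminus F),$$ where $g=2s'-s$, $h=s-s'$, and $F$ is a perfect matching of $K_{r+1,r+1}$.
   Context: All graphs are finite, simple and undirected. $Q(G)=D(G)+A(G)$ is the signless Laplacian matrix (degree diagonal matrix plus adjacency matrix), and $\mathrm{Spec}_Q(G)$ is the multiset of its eigenvalues; $[x]^a$ denotes the value $x$ with multiplicity $a$. $K_{r+1,r+1}\setminus F$ denotes the graph obtained from the complete bipartite graph $K_{r+1,r+1}$ by deleting the edges of a perfect matching $F$. For a graph $H$ and integer $k\ge0$, $kH$ is the disjoint union of $k$ copies of $H$, and $\cup$ denotes disjoint union. *)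

theory Defs
  imports "Jordan_Normal_Form.Char_Poly" "HOL-Library.Multiset"
begin

text \<open>A finite simple graph is given by a finite vertex set V and an edge relation E
  (only its restriction to V matters); simple = symmetric and irreflexive on V.\<close>

type_synonym 'a graph = "'a set \<times> ('a \<Rightarrow> 'a \<Rightarrow> bool)"

definition verts :: "'a graph \<Rightarrow> 'a set" where "verts G = fst G"
definition adj :: "'a graph \<Rightarrow> 'a \<Rightarrow> 'a \<Rightarrow> bool"
  where "adj G u v = (u \<in> fst G \<and> v \<in> fst G \<and> snd G u v)"

definition simple_graph :: "'a graph \<Rightarrow> bool" where
  "simple_graph G = (finite (verts G) \<and> (\<forall>u v. adj G u v \<longrightarrow> adj G v u)
                       \<and> (\<forall>u. \<not> adj G u u))"

definition degree :: "'a graph \<Rightarrow> 'a \<Rightarrow> nat" where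
  "degree G u = card {v \<in> verts G. adj G u v}"

definition regular :: "'a graph \<Rightarrow> nat \<Rightarrow> bool" where
  "regular G r = (\<forall>u \<in> verts G. degree G u = r)"

definition connected :: "'a graph \<Rightarrow> bool" where
  "connected G = (verts G \<noteq> {} \<and> (\<forall>u \<in> verts G. \<forall>v \<in> verts G. (adj G)\<^sup>*\<^sup>* u v))"

definition graph_iso :: "'a graph \<Rightarrow> 'b graph \<Rightarrow> bool" where
  "graph_iso G H = (\<exists>f. bij_betw f (verts G) (verts H) \<and>
      (\<forall>u \<in> verts G. \<forall>v \<in> verts G. adj G u v \<longleftrightarrow> adj H (f u) (f v)))"

definition signless_laplacian :: "nat graph \<Rightarrow> nat \<Rightarrow> real mat" where
  "signless_laplacian G n = mat n n (\<lambda>(i,j).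
     (if i = j then real (degree G i) else 0) + (if adj G i j then 1 else 0))"

definition eig_mult :: "real mat \<Rightarrow> real \<Rightarrow> nat" where
  "eig_mult A x = order x (char_poly A)"

definition has_spectrum :: "real mat \<Rightarrow> real multiset \<Rightarrow> bool" where
  "has_spectrum A M = (\<forall>x. eig_mult A x = count M x)"

definition complete_graph :: "nat \<Rightarrow> nat graph" where
  "complete_graph m = ({..<m}, \<lambda>u v. u \<noteq> v)"

definition complete_bipartite :: "nat \<Rightarrow> (nat \<times> bool) graph" where
  "complete_bipartite m = ({..<m} \<times> UNIV, \<lambda>u v. snd u \<noteq> snd v)"

definition perfect_matching :: "'a graph \<Rightarrow> 'a set set \<Rightarrow> bool" where
  "perfect_matching G F = ((\<forall>e \<in> F. \<exists>u v. e = {u, v} \<and> adj G u v) \<and>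
      (\<forall>u \<in> verts G. \<exists>!e. e \<in> F \<and> u \<in> e))"

definition delete_edges :: "'a graph \<Rightarrow> 'a set set \<Rightarrow> 'a graph" where
  "delete_edges G F = (verts G, \<lambda>u v. adj G u v \<and> {u, v} \<notin> F)"

definition copies :: "nat \<Rightarrow> 'a graph \<Rightarrow> (nat \<times> 'a) graph" where
  "copies k H = ({..<k} \<times> verts H, \<lambda>(c, u) (d, v). c = d \<and> adj H u v)"

definition disj_union :: "'a graph \<Rightarrow> 'b graph \<Rightarrow> ('a + 'b) graph" where
  "disj_union G H = (Inl ` verts G \<union> Inr ` verts H,
     \<lambda>x y. case (x, y) of (Inl u, Inl v) \<Rightarrow> adj G u v
                       | (Inr u, Inr v) \<Rightarrow> adj H u v
                       | _ \<Rightarrow> False)"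

end

theory Submission
  imports Defs "Jordan_Normal_Form.Schur_Decomposition"
begin



lemma order_prod_lin: "Polynomial.order x (\<Prod>y\<in>#M. [:-y,1:]) = count M (x::real)"
proof (induction M)
  case empty then show ?case by simp
next
  case (add y M)
  have nz: "(\<Prod>y\<in>#M. [:-y,1:]) \<noteq> (0::real poly)" by (auto simp: prod_mset_zero_iff)
  have o1: "Polynomial.order x [:-y,1:] = (if x = y then 1 else 0)"
  proof (cases "x = y")
    case True then show ?thesis using order_power_n_n[of x 1] by simp
  next
    case False
    have "Polynomial.order x [:-y,1:] = 0" by (rule order_0I) (use False in simp)
    then show ?thesis using False by simp
  qed
  have "Polynomial.order x ([:-y,1:] * (\<Prod>y\<in>#M. [:-y,1:])) = Polynomial.order x [:-y,1:] + Polynomial.order x (\<Prod>y\<in>#M. [:-y,1:])"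
    by (rule order_mult) (use nz in \<open>metis mult_eq_0_iff pCons_eq_0_iff one_neq_zero\<close>)
  then have "Polynomial.order x (\<Prod>y\<in>#add_mset y M. [:-y,1:]) = Polynomial.order x [:-y,1:] + Polynomial.order x (\<Prod>y\<in>#M. [:-y,1:])"
    by (simp only: image_mset_add_mset prod_mset.add_mset)
  then show ?case unfolding add.IH o1 count_add_mset by simp
qed

lemma prod_lin_dvd:
  assumes "p \<noteq> 0" "\<And>x. count M x \<le> Polynomial.order x p"
  shows "(\<Prod>y\<in>#M. [:-y,1:]) dvd (p :: real poly)"
  using assms(2)
proof (induction M)
  case empty then show ?case by simp
next
  case (add x M)
  have "(\<Prod>y\<in>#M. [:-y,1:]) dvd p"
  proof (rule add.IH)
    fix z
    have "count M z \<le> count (add_mset x M) z" by simp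
    then show "count M z \<le> Polynomial.order z p" using add.prems[of z] by linarith
  qed
  then obtain q where pq: "p = (\<Prod>y\<in>#M. [:-y,1:]) * q" by blast
  have nz: "(\<Prod>y\<in>#M. [:-y,1:]) * q \<noteq> 0" using pq assms(1) by simp
  have "Polynomial.order x p = count M x + Polynomial.order x q"
    using pq order_mult[OF nz] order_prod_lin by simp
  moreover have "Suc (count M x) \<le> Polynomial.order x p" using add.prems[of x] by simp
  ultimately have "1 \<le> Polynomial.order x q" by simp
  then have "[:-x,1:] ^ 1 dvd q" using order_divides by blast
  then obtain q' where q': "q = [:-x,1:] * q'" by auto
  have e1: "(\<Prod>y\<in>#add_mset x M. [:-y,1:]) = [:-x,1:] * (\<Prod>y\<in>#M. [:-y,1:])"
    by (simp only: image_mset_add_mset prod_mset.add_mset)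
  have "p = ([:-x,1:] * (\<Prod>y\<in>#M. [:-y,1:])) * q'" using pq q' by (simp only: ac_simps)
  then show ?case unfolding e1 by (metis dvd_triv_left)
qed




lemma char_poly_split:
  assumes L: "(L :: real mat) \<in> carrier_mat n n" and sp: "has_spectrum L Ms" and sz: "size Ms = n"
  shows "\<exists>es. mset es = Ms \<and> char_poly L = (\<Prod>e\<leftarrow>es. [:-e,1:])"
proof -
  let ?p = "char_poly L"
  have dp: "Polynomial.degree ?p = n" and cp: "coeff ?p n = 1" using degree_monic_char_poly[OF L] by auto
  have p0: "?p \<noteq> 0" using cp by auto
  have dv: "(\<Prod>y\<in>#Ms. [:-y,1:]) dvd ?p"
    by (rule prod_lin_dvd[OF p0]) (use sp in \<open>simp add: has_spectrum_def eig_mult_def\<close>)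
  obtain es where es: "mset es = Ms" using ex_mset by blast
  have qe: "(\<Prod>y\<in>#Ms. [:-y,1:]) = (\<Prod>e\<leftarrow>es. [:-e,1:])"
    unfolding es[symmetric] mset_map[symmetric] prod_mset_prod_list by (rule refl)
  let ?q = "(\<Prod>e\<leftarrow>es. [:-e,1:]) :: real poly"
  have dq: "Polynomial.degree ?q = n" using degree_linear_factors[of uminus es] sz es size_mset[of es] by simp
  have mq: "monic ?q" by (rule monic_prod_list) auto
  obtain c where pc: "?p = ?q * c" using dv qe by (metis dvdE)
  have c0: "c \<noteq> 0" using p0 pc by (metis mult_zero_right)
  have q0: "?q \<noteq> 0" using mq by (metis leading_coeff_0_iff zero_neq_one)
  have "Polynomial.degree ?p = Polynomial.degree ?q + Polynomial.degree c" using pc degree_mult_eq[OF q0 c0] by metis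
  then have dc: "Polynomial.degree c = 0" using dp dq by simp
  have "lead_coeff ?p = lead_coeff ?q * lead_coeff c" using pc lead_coeff_mult by metis
  then have "lead_coeff c = 1" using mq cp dp by (metis mult_1)
  then have "c = 1" using dc degree_0_id[OF dc] by (simp add: one_pCons)
  then show ?thesis using pc es by (metis mult.right_neutral)
qed



lemma mult_entry:
  assumes "X \<in> carrier_mat n n" "Y \<in> carrier_mat n n" "i < n" "j < n"
  shows "(X * Y) $$ (i,j) = (\<Sum>k<n. X $$ (i,k) * Y $$ (k,j))"
  using assms by (simp add: scalar_prod_def atLeast0LessThan)

lemma sim_add:
  assumes s1: "similar_mat_wit A B P Q" and s2: "similar_mat_wit A' B' P Q"
  shows "similar_mat_wit (A + A') (B + B') P Q"
proof -
  define n where "n = dim_row A"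
  note m = similar_mat_witD[OF n_def s1]
  define n' where "n' = dim_row A'"
  note m' = similar_mat_witD[OF n'_def s2]
  have nn: "n' = n" using m(6) m'(6) by auto
  note m' = m'[unfolded nn]
  have e1: "(P*B + P*B')*Q = P*B*Q + P*B'*Q" by (rule add_mult_distrib_mat[OF mult_carrier_mat[OF m(6) m(5)] mult_carrier_mat[OF m(6) m'(5)] m(7)])
  have e2: "P*(B+B') = P*B + P*B'" by (rule mult_add_distrib_mat[OF m(6) m(5) m'(5)])
  have eq: "A + A' = P*(B+B')*Q" by (simp only: e2 e1 m(3) m'(3))
  show ?thesis by (rule similar_mat_witI[OF m(1) m(2) eq add_carrier_mat[OF m'(4)] add_carrier_mat[OF m'(5)] m(6) m(7)])
qed

lemma sim_mult:
  fixes A B P Q :: "real mat"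
  assumes s1: "similar_mat_wit A B P Q" and s2: "similar_mat_wit A' B' P Q"
  shows "similar_mat_wit (A * A') (B * B') P Q"
proof -
  define n where "n = dim_row A"
  note m = similar_mat_witD[OF n_def s1]
  define n' where "n' = dim_row A'"
  note m' = similar_mat_witD[OF n'_def s2]
  have nn: "n' = n" using m(6) m'(6) by auto
  note m' = m'[unfolded nn]
  have "A * A' = (P * B * Q) * (P * B' * Q)" by (simp only: m(3) m'(3))
  also have "\<dots> = P * (B * B') * Q"
  proof -
    have QPX: "\<And>X :: real mat. X \<in> carrier_mat n n \<Longrightarrow> Q * (P * X) = X"
    proof -
      fix X :: "real mat" assume X: "X \<in> carrier_mat n n"
      have "Q * (P * X) = (Q * P) * X" by (rule assoc_mult_mat[symmetric, OF m(7) m(6) X])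
      also have "\<dots> = 1\<^sub>m n * X" by (simp only: m(2))
      also have "\<dots> = X" by (rule left_mult_one_mat[OF X])
      finally show "Q * (P * X) = X" .
    qed
    have c: "B * Q \<in> carrier_mat n n" "B' * Q \<in> carrier_mat n n" "P * (B' * Q) \<in> carrier_mat n n"
      "B * B' \<in> carrier_mat n n"
      by (rule mult_carrier_mat[OF m(5) m(7)], rule mult_carrier_mat[OF m'(5) m(7)],
          rule mult_carrier_mat[OF m(6) mult_carrier_mat[OF m'(5) m(7)]], rule mult_carrier_mat[OF m(5) m'(5)])
    have "(P * B * Q) * (P * B' * Q) = (P * (B * Q)) * (P * (B' * Q))"
      by (simp only: assoc_mult_mat[OF m(6) m(5) m(7)] assoc_mult_mat[OF m(6) m'(5) m(7)])
    also have "\<dots> = P * ((B * Q) * (P * (B' * Q)))"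
      by (rule assoc_mult_mat[OF m(6) c(1) c(3)])
    also have "(B * Q) * (P * (B' * Q)) = B * (Q * (P * (B' * Q)))"
      by (rule assoc_mult_mat[OF m(5) m(7) c(3)])
    also have "Q * (P * (B' * Q)) = B' * Q" by (rule QPX[OF c(2)])
    also have "B * (B' * Q) = (B * B') * Q"
      by (rule assoc_mult_mat[symmetric, OF m(5) m'(5) m(7)])
    also have "P * ((B * B') * Q) = P * (B * B') * Q"
      by (rule assoc_mult_mat[symmetric, OF m(6) c(4) m(7)])
    finally show ?thesis .
  qed
  finally have eq: "A * A' = P * (B * B') * Q" .
  show ?thesis by (rule similar_mat_witI[OF m(1) m(2) eq mult_carrier_mat[OF m(4) m'(4)] mult_carrier_mat[OF m(5) m'(5)] m(6) m(7)])
qed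

lemma sim_one:
  assumes s1: "similar_mat_wit A B P Q"
  shows "similar_mat_wit (1\<^sub>m (dim_row A)) (1\<^sub>m (dim_row A)) P Q"
proof -
  define n where "n = dim_row A"
  note m = similar_mat_witD[OF n_def s1]
  have "P * 1\<^sub>m n = P" using m(6) by (rule right_mult_one_mat)
  then have eq: "1\<^sub>m n = P * 1\<^sub>m n * Q" using m(1) by simp
  show ?thesis unfolding n_def[symmetric]
    by (rule similar_mat_witI[OF m(1) m(2) eq one_carrier_mat one_carrier_mat m(6) m(7)])
qed

definition trc :: "real mat \<Rightarrow> real" where
  "trc M = (\<Sum>i<dim_row M. M $$ (i,i))"

lemma trc_comm:
  assumes "X \<in> carrier_mat n n" "Y \<in> carrier_mat n n"
  shows "trc (X * Y) = trc (Y * X)"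
proof -
  have "trc (X * Y) = (\<Sum>i<n. \<Sum>k<n. X $$ (i,k) * Y $$ (k,i))"
    unfolding trc_def using assms by (intro sum.cong) (auto simp: mult_entry simp del: index_mult_mat(1))
  also have "\<dots> = (\<Sum>k<n. \<Sum>i<n. Y $$ (k,i) * X $$ (i,k))"
    by (subst sum.swap) (simp add: mult.commute)
  also have "\<dots> = trc (Y * X)"
    unfolding trc_def using assms by (intro sum.cong) (auto simp: mult_entry simp del: index_mult_mat(1))
  finally show ?thesis .
qed

lemma trc_sim:
  assumes s: "similar_mat_wit A B P Q"
  shows "trc A = trc B"
proof -
  define n where "n = dim_row A"
  note m = similar_mat_witD[OF n_def s]
  have "trc A = trc ((P * B) * Q)" using m by simp
  also have "\<dots> = trc (Q * (P * B))" using m by (intro trc_comm[of _ n]) auto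
  also have "Q * (P * B) = (Q * P) * B" by (rule assoc_mult_mat[symmetric]) (use m in auto)
  also have "\<dots> = B" using m by simp
  finally show ?thesis .
qed

lemma ut_mult:
  assumes B: "B \<in> carrier_mat n n" and C: "C \<in> carrier_mat n n"
    and uB: "upper_triangular B" and uC: "upper_triangular C"
  shows "upper_triangular (B * C) \<and> (\<forall>i<n. (B * C) $$ (i,i) = B $$ (i,i) * C $$ (i,i))"
proof
  show "upper_triangular (B * C)"
  proof (rule upper_triangularI)
    fix i j assume ji: "j < i" and i: "i < dim_row (B * C)"
    then have i': "i < n" using B by simp
    have "(B * C) $$ (i,j) = (\<Sum>k<n. B $$ (i,k) * C $$ (k,j))"
      using B C i' ji by (simp add: mult_entry del: index_mult_mat)
    also have "\<dots> = 0"
    proof (rule sum.neutral, safe)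
      fix k assume k: "k < n"
      show "B $$ (i,k) * C $$ (k,j) = 0"
      proof (cases "k < i")
        case True then show ?thesis using upper_triangularD[OF uB True] B i' by simp
      next
        case False then have "j < k" using ji by simp
        then show ?thesis using upper_triangularD[OF uC \<open>j < k\<close>] C k by simp
      qed
    qed
    finally show "(B * C) $$ (i,j) = 0" .
  qed
  show "\<forall>i<n. (B * C) $$ (i,i) = B $$ (i,i) * C $$ (i,i)"
  proof safe
    fix i assume i: "i < n"
    have "(B * C) $$ (i,i) = (\<Sum>k<n. B $$ (i,k) * C $$ (k,i))"
      using B C i by (simp add: mult_entry del: index_mult_mat)
    also have "\<dots> = B $$ (i,i) * C $$ (i,i)"
    proof -
      have "(\<Sum>k<n. B $$ (i,k) * C $$ (k,i)) = (\<Sum>k<n. if k = i then B $$ (i,i) * C $$ (i,i) else 0)"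
      proof (rule sum.cong, simp)
        fix k assume k: "k \<in> {..<n}"
        show "B $$ (i,k) * C $$ (k,i) = (if k = i then B $$ (i,i) * C $$ (i,i) else 0)"
        proof (cases "k < i")
          case True then show ?thesis using upper_triangularD[OF uB True] B i by simp
        next
          case False
          show ?thesis
          proof (cases "k = i")
            case False
            then have "i < k" using \<open>\<not> k < i\<close> by simp
            then show ?thesis using upper_triangularD[OF uC \<open>i < k\<close>] C k False by simp
          qed simp
        qed
      qed
      also have "\<dots> = B $$ (i,i) * C $$ (i,i)" using i by simp
      finally show ?thesis .
    qed
    finally show "(B * C) $$ (i,i) = B $$ (i,i) * C $$ (i,i)" .
  qed
qed




lemma ut_add:
  fixes B C :: "real mat"
  assumes B: "B \<in> carrier_mat n n" and C: "C \<in> carrier_mat n n"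
    and uB: "upper_triangular B" and uC: "upper_triangular C"
  shows "upper_triangular (B + C) \<and> (\<forall>i<n. (B + C) $$ (i,i) = B $$ (i,i) + C $$ (i,i))"
proof
  show "upper_triangular (B + C)"
  proof (rule upper_triangularI)
    fix i j assume ji: "j < i" and i: "i < dim_row (B + C)"
    then show "(B + C) $$ (i,j) = 0" using upper_triangularD[OF uB ji] upper_triangularD[OF uC ji] B C by auto
  qed
  show "\<forall>i<n. (B + C) $$ (i,i) = B $$ (i,i) + C $$ (i,i)" using B C by auto
qed

lemma ut_smult:
  fixes B :: "real mat"
  assumes B: "B \<in> carrier_mat n n" and uB: "upper_triangular B"
  shows "upper_triangular (k \<cdot>\<^sub>m B) \<and> (\<forall>i<n. (k \<cdot>\<^sub>m B) $$ (i,i) = k * B $$ (i,i))"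
proof
  show "upper_triangular (k \<cdot>\<^sub>m B)"
  proof (rule upper_triangularI)
    fix i j assume ji: "j < i" and i: "i < dim_row (k \<cdot>\<^sub>m B)"
    then show "(k \<cdot>\<^sub>m B) $$ (i,j) = 0" using upper_triangularD[OF uB ji] B by auto
  qed
  show "\<forall>i<n. (k \<cdot>\<^sub>m B) $$ (i,i) = k * B $$ (i,i)" using B by auto
qed

lemma ut_pow:
  fixes B :: "real mat"
  assumes B: "B \<in> carrier_mat n n" and uB: "upper_triangular B"
  shows "upper_triangular (B ^\<^sub>m k) \<and> (\<forall>i<n. (B ^\<^sub>m k) $$ (i,i) = (B $$ (i,i)) ^ k)"
proof (induction k)
  case 0
  then show ?case using B by auto
next
  case (Suc k)
  have Bk: "B ^\<^sub>m k \<in> carrier_mat n n" using B by simp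
  have "B ^\<^sub>m Suc k = B ^\<^sub>m k * B" by simp
  then show ?case using ut_mult[OF Bk B _ uB] Suc by auto
qed

lemma sim_smult_one:
  fixes A B P Q :: "real mat"
  assumes s: "similar_mat_wit A B P Q"
  shows "similar_mat_wit (k \<cdot>\<^sub>m 1\<^sub>m (dim_row A)) (k \<cdot>\<^sub>m 1\<^sub>m (dim_row A)) P Q"
  by (rule similar_mat_wit_smult[OF sim_one[OF s]])

lemma spectral_facts:
  fixes A :: "real mat" and c \<alpha> \<beta> :: real
  assumes A: "A \<in> carrier_mat n n"
    and sym: "\<And>i j. i < n \<Longrightarrow> j < n \<Longrightarrow> A $$ (i,j) = A $$ (j,i)"
    and cp: "char_poly (A + c \<cdot>\<^sub>m 1\<^sub>m n) = (\<Prod>e\<leftarrow>es. [:-e,1:])"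
    and roots: "\<And>e. e \<in> set es \<Longrightarrow> (e-c)^4 + \<alpha>*(e-c)^2 + \<beta> = 0"
  shows "\<And>i j. i < n \<Longrightarrow> j < n \<Longrightarrow>
           ((A*A)*(A*A)) $$ (i,j) + \<alpha> * (A*A) $$ (i,j) + \<beta> * (if i = j then 1 else 0) = 0"
    and "trc (A ^\<^sub>m k) = (\<Sum>e\<leftarrow>es. (e-c)^k)"
proof -
  let ?L = "A + c \<cdot>\<^sub>m 1\<^sub>m n"
  have Lc: "?L \<in> carrier_mat n n" using A by simp
  obtain B P Q where sd: "schur_decomposition ?L es = (B,P,Q)" by (cases "schur_decomposition ?L es") auto
  from schur_decomposition[OF Lc cp sd]
  have sLB: "similar_mat_wit ?L B P Q" and uB: "upper_triangular B" and dB: "diag_mat B = es" by auto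
  note mm = similar_mat_witD2[OF Lc sLB]
  have Bc: "B \<in> carrier_mat n n" using mm by auto
  have les: "length es = n" using dB Bc unfolding diag_mat_def by auto
  have Bd: "\<And>i. i < n \<Longrightarrow> B $$ (i,i) = es ! i" using dB Bc unfolding diag_mat_def by auto
  define C where "C = B + (-c) \<cdot>\<^sub>m 1\<^sub>m n"
  have dimL: "dim_row ?L = n" by simp
  have s1: "similar_mat_wit ((-c) \<cdot>\<^sub>m 1\<^sub>m n) ((-c) \<cdot>\<^sub>m 1\<^sub>m n) P Q"
    using sim_smult_one[OF sLB, of "-c"] unfolding dimL .
  have "similar_mat_wit (?L + (-c) \<cdot>\<^sub>m 1\<^sub>m n) C P Q" unfolding C_def by (rule sim_add[OF sLB s1])
  moreover have "?L + (-c) \<cdot>\<^sub>m 1\<^sub>m n = A" by (rule eq_matI) (use A in auto)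
  ultimately have sAC: "similar_mat_wit A C P Q" by simp
  have Cc: "C \<in> carrier_mat n n" unfolding C_def using Bc by simp
  have uC: "upper_triangular C" and dC: "\<And>i. i < n \<Longrightarrow> C $$ (i,i) = es ! i - c"
    using ut_add[OF Bc _ uB, of "(-c) \<cdot>\<^sub>m 1\<^sub>m n"] ut_smult[OF one_carrier_mat[of n] upper_triangular_one, of "-c"] Bd
    unfolding C_def by auto
  have "trc (A ^\<^sub>m k) = trc (C ^\<^sub>m k)" by (rule trc_sim[OF similar_mat_wit_pow[OF sAC]])
  also have "\<dots> = (\<Sum>i<n. (es ! i - c) ^ k)"
    unfolding trc_def using ut_pow[OF Cc uC, of k] Cc dC by simp
  also have "\<dots> = (\<Sum>e\<leftarrow>es. (e-c)^k)"
    unfolding les[symmetric] by (simp add: sum_list_sum_nth atLeast0LessThan)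
  finally show "trc (A ^\<^sub>m k) = (\<Sum>e\<leftarrow>es. (e-c)^k)" .
  define S where "S = A * A"
  define N where "N = S * S + \<alpha> \<cdot>\<^sub>m S + \<beta> \<cdot>\<^sub>m 1\<^sub>m n"
  define U where "U = C * C"
  define T where "T = U * U + \<alpha> \<cdot>\<^sub>m U + \<beta> \<cdot>\<^sub>m 1\<^sub>m n"
  have dimA: "dim_row A = n" using A by simp
  have sSU: "similar_mat_wit S U P Q" unfolding S_def U_def by (rule sim_mult[OF sAC sAC])
  have sNT: "similar_mat_wit N T P Q" unfolding N_def T_def
    by (intro sim_add sim_mult sSU similar_mat_wit_smult sim_smult_one[OF sAC, unfolded dimA])
  have Uc: "U \<in> carrier_mat n n" unfolding U_def using Cc by simp
  have uU: "upper_triangular U" and dU: "\<And>i. i < n \<Longrightarrow> U $$ (i,i) = (es ! i - c)^2"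
    using ut_mult[OF Cc Cc uC uC] dC unfolding U_def by (auto simp: power2_eq_square)
  have UUc: "U * U \<in> carrier_mat n n" using Uc by simp
  have uUU: "upper_triangular (U * U)" and dUU: "\<And>i. i < n \<Longrightarrow> (U * U) $$ (i,i) = (es ! i - c)^4"
    using ut_mult[OF Uc Uc uU uU] dU by (auto simp: power4_eq_xxxx power2_eq_square)
  have aU: "upper_triangular (\<alpha> \<cdot>\<^sub>m U)" "\<And>i. i < n \<Longrightarrow> (\<alpha> \<cdot>\<^sub>m U) $$ (i,i) = \<alpha> * (es ! i - c)^2"
    using ut_smult[OF Uc uU, of \<alpha>] dU by auto
  have b1: "upper_triangular (\<beta> \<cdot>\<^sub>m 1\<^sub>m n)" "\<And>i. i < n \<Longrightarrow> (\<beta> \<cdot>\<^sub>m 1\<^sub>m n) $$ (i,i) = \<beta>"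
    using ut_smult[OF one_carrier_mat[of n] upper_triangular_one, of \<beta>] by auto
  have s2: "U * U + \<alpha> \<cdot>\<^sub>m U \<in> carrier_mat n n" using Uc by simp
  have u2: "upper_triangular (U * U + \<alpha> \<cdot>\<^sub>m U)" and d2: "\<And>i. i < n \<Longrightarrow> (U * U + \<alpha> \<cdot>\<^sub>m U) $$ (i,i) = (es ! i - c)^4 + \<alpha> * (es ! i - c)^2"
    using ut_add[OF UUc _ uUU aU(1)] dUU aU(2) Uc by auto
  have Tc: "T \<in> carrier_mat n n" unfolding T_def using Uc by simp
  have uT: "upper_triangular T" and dT: "\<And>i. i < n \<Longrightarrow> T $$ (i,i) = 0"
  proof -
    have "upper_triangular T \<and> (\<forall>i<n. T $$ (i,i) = (es ! i - c)^4 + \<alpha> * (es ! i - c)^2 + \<beta>)"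
      using ut_add[OF s2 _ u2 b1(1)] d2 b1(2) unfolding T_def by auto
    moreover have "\<And>i. i < n \<Longrightarrow> (es ! i - c)^4 + \<alpha> * (es ! i - c)^2 + \<beta> = 0"
      using roots les by auto
    ultimately show "upper_triangular T" "\<And>i. i < n \<Longrightarrow> T $$ (i,i) = 0" by auto
  qed
  have dTT: "\<And>i. i < n \<Longrightarrow> (T * T) $$ (i,i) = 0" using ut_mult[OF Tc Tc uT uT] dT by auto
  have "trc (N * N) = trc (T * T)" by (rule trc_sim[OF sim_mult[OF sNT sNT]])
  also have "\<dots> = 0" unfolding trc_def using Tc dTT by simp
  finally have tr0: "trc (N * N) = 0" .
  have Sc: "S \<in> carrier_mat n n" unfolding S_def using A by simp
  have Nc: "N \<in> carrier_mat n n" unfolding N_def using Sc by simp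
  have Ssym: "\<And>i j. i < n \<Longrightarrow> j < n \<Longrightarrow> S $$ (i,j) = S $$ (j,i)"
    unfolding S_def using A by (simp add: mult_entry sym mult.commute del: index_mult_mat(1))
  have SSsym: "\<And>i j. i < n \<Longrightarrow> j < n \<Longrightarrow> (S * S) $$ (i,j) = (S * S) $$ (j,i)"
    using Sc by (simp add: mult_entry Ssym mult.commute del: index_mult_mat(1))
  have Nent: "\<And>i j. i < n \<Longrightarrow> j < n \<Longrightarrow> N $$ (i,j) = (S * S) $$ (i,j) + \<alpha> * S $$ (i,j) + \<beta> * (if i = j then 1 else 0)"
    unfolding N_def using Sc by simp
  have Nsym: "\<And>i j. i < n \<Longrightarrow> j < n \<Longrightarrow> N $$ (i,j) = N $$ (j,i)"
    using Nent SSsym Ssym by auto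
  have "trc (N * N) = (\<Sum>i<n. \<Sum>k<n. (N $$ (i,k))^2)"
    unfolding trc_def using Nc by (auto simp: mult_entry Nsym power2_eq_square simp del: index_mult_mat(1) intro!: sum.cong)
  then have "(\<Sum>i<n. \<Sum>k<n. (N $$ (i,k))^2) = 0" using tr0 by simp
  then have "\<forall>i\<in>{..<n}. (\<Sum>k<n. (N $$ (i,k))^2) = 0"
    by (subst sum_nonneg_eq_0_iff[symmetric]) (auto intro: sum_nonneg)
  then have N0: "\<And>i k. i < n \<Longrightarrow> k < n \<Longrightarrow> N $$ (i,k) = 0"
    by (auto simp: sum_nonneg_eq_0_iff)
  fix i j assume "i < n" "j < n"
  then show "((A*A)*(A*A)) $$ (i,j) + \<alpha> * (A*A) $$ (i,j) + \<beta> * (if i = j then 1 else 0) = 0"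
    using N0 Nent unfolding S_def by metis
qed




definition cn :: "nat graph \<Rightarrow> nat \<Rightarrow> nat \<Rightarrow> nat \<Rightarrow> nat" where
  "cn G n u v = card {w. w < n \<and> adj G u w \<and> adj G w v}"

definition ind :: "bool \<Rightarrow> real" where "ind P = (if P then 1 else 0)"

lemma sum_ind: "finite S \<Longrightarrow> (\<Sum>x\<in>S. ind (P x)) = real (card {x\<in>S. P x})"
  unfolding ind_def by (simp add: sum.If_cases Int_def)

locale rg =
  fixes G :: "nat graph" and n r :: nat
  assumes sg: "simple_graph G" and V: "verts G = {..<n}" and r2: "r \<ge> 2"
    and reg: "regular G r"
    and key: "\<And>u v. u < n \<Longrightarrow> v < n \<Longrightarrow>
      (\<Sum>w<n. real (cn G n u w) * real (cn G n w v)) =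
        (real r ^ 2 + 1) * real (cn G n u v) - (if u = v then real r ^ 2 else 0)"
begin

abbreviation m where "m \<equiv> cn G n"
definition nbr where "nbr u = {v. v < n \<and> adj G u v}"

lemma adjV: "adj G u v \<Longrightarrow> u < n \<and> v < n"
  using V unfolding adj_def verts_def by auto

lemma adj_sym: "adj G u v \<Longrightarrow> adj G v u"
  using sg unfolding simple_graph_def by blast

lemma adj_irr: "\<not> adj G u u"
  using sg unfolding simple_graph_def by blast

lemma card_nbr: "u < n \<Longrightarrow> card (nbr u) = r"
proof -
  assume u: "u < n"
  have "degree G u = r" using reg u V unfolding regular_def by auto
  moreover have "{v \<in> verts G. adj G u v} = nbr u" unfolding nbr_def V by auto
  ultimately show ?thesis unfolding degree_def by simp
qed

lemma fin_nbr[simp]: "finite (nbr u)" unfolding nbr_def by simp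

lemma m_sym: "m u v = m v u"
  unfolding cn_def by (metis (no_types, lifting) adj_sym)

lemma m_set: "{w. w < n \<and> adj G u w \<and> adj G w v} = {w \<in> {..<n}. adj G u w \<and> adj G w v}" by auto

lemma m_uu: "u < n \<Longrightarrow> m u u = r"
proof -
  assume u: "u < n"
  have "{w. w < n \<and> adj G u w \<and> adj G w u} = nbr u" unfolding nbr_def using adj_sym by blast
  then show ?thesis unfolding cn_def using card_nbr[OF u] by simp
qed

lemma m_ind: "real (m u v) = (\<Sum>w<n. ind (adj G u w) * ind (adj G w v))"
proof -
  have "(\<Sum>w<n. ind (adj G u w) * ind (adj G w v)) = (\<Sum>w<n. ind (adj G u w \<and> adj G w v))"
    unfolding ind_def by (intro sum.cong) auto
  also have "\<dots> = real (card {w \<in> {..<n}. adj G u w \<and> adj G w v})" by (rule sum_ind) simp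
  finally show ?thesis unfolding cn_def m_set by simp
qed

lemma nbr_ind: "u < n \<Longrightarrow> (\<Sum>v<n. ind (adj G u v)) = real r"
proof -
  assume u: "u < n"
  have "(\<Sum>v<n. ind (adj G u v)) = real (card {v \<in> {..<n}. adj G u v})" by (rule sum_ind) simp
  also have "{v \<in> {..<n}. adj G u v} = nbr u" unfolding nbr_def by auto
  finally show ?thesis using card_nbr[OF u] by simp
qed

lemma sumM: "u < n \<Longrightarrow> (\<Sum>v<n. real (m u v)) = real r ^ 2"
proof -
  assume u: "u < n"
  have "(\<Sum>v<n. real (m u v)) = (\<Sum>v<n. \<Sum>w<n. ind (adj G u w) * ind (adj G w v))"
    by (simp add: m_ind)
  also have "\<dots> = (\<Sum>w<n. ind (adj G u w) * (\<Sum>v<n. ind (adj G w v)))"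
    by (subst sum.swap) (simp add: sum_distrib_left)
  also have "\<dots> = (\<Sum>w<n. ind (adj G u w) * real r)"
  proof (rule sum.cong, simp)
    fix w assume "w \<in> {..<n}"
    then show "ind (adj G u w) * (\<Sum>v<n. ind (adj G w v)) = ind (adj G u w) * real r"
      using nbr_ind by simp
  qed
  also have "\<dots> = (\<Sum>w<n. ind (adj G u w)) * real r" by (simp add: sum_distrib_right)
  also have "\<dots> = real r * real r" using nbr_ind[OF u] by simp
  finally show ?thesis by (simp add: power2_eq_square)
qed

lemma S2: "u < n \<Longrightarrow> (\<Sum>v<n. real (m u v) ^ 2) = real r ^ 3 - real r ^ 2 + real r"
proof -
  assume u: "u < n"
  have "(\<Sum>v<n. real (m u v) ^ 2) = (\<Sum>w<n. real (m u w) * real (m w u))"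
    by (simp add: power2_eq_square m_sym)
  also have "\<dots> = (real r ^ 2 + 1) * real r - real r ^ 2" using key[OF u u] m_uu[OF u] by simp
  finally show ?thesis by (simp add: algebra_simps power3_eq_cube power2_eq_square)
qed

lemma m_lt: "u < n \<Longrightarrow> v < n \<Longrightarrow> u \<noteq> v \<Longrightarrow> m u v < r"
proof -
  assume u: "u < n" and v: "v < n" and uv: "u \<noteq> v"
  have "(real r ^ 2 + 1) * real (m u v) = (\<Sum>w<n. real (m u w) * real (m w v))"
    using key[OF u v] uv by simp
  also have "\<dots> \<le> (\<Sum>w<n. (real (m u w) ^ 2 + real (m v w) ^ 2) / 2)"
  proof (rule sum_mono)
    fix w
    have "0 \<le> (real (m u w) - real (m v w))^2" by simp
    then show "real (m u w) * real (m w v) \<le> (real (m u w) ^ 2 + real (m v w) ^ 2) / 2"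
      by (simp add: m_sym[of w v] power2_eq_square algebra_simps)
  qed
  also have "\<dots> = ((\<Sum>w<n. real (m u w) ^ 2) + (\<Sum>w<n. real (m v w) ^ 2)) / 2"
    by (simp add: sum.distrib sum_divide_distrib[symmetric] add_divide_distrib)
  also have "\<dots> = real r ^ 3 - real r ^ 2 + real r" using S2[OF u] S2[OF v] by simp
  finally have h: "(real r ^ 2 + 1) * real (m u v) \<le> real r ^ 3 - real r ^ 2 + real r" .
  have rp: "real r \<ge> 2" using r2 by simp
  have "real r ^ 3 - real r ^ 2 + real r < (real r ^ 2 + 1) * real r"
    using rp by (simp add: power2_eq_square power3_eq_cube algebra_simps)
  then have "(real r ^ 2 + 1) * real (m u v) < (real r ^ 2 + 1) * real r" using h by linarith
  then have "real (m u v) < real r" by (smt (verit) mult_left_mono zero_le_power2)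
  then show ?thesis by simp
qed

lemma m_pos_adj: "0 < m u v \<Longrightarrow> \<exists>w. adj G u w \<and> adj G w v"
  unfolding cn_def by (metis (mono_tags, lifting) card.empty empty_Collect_eq less_irrefl)

lemma m_lt_n: "0 < m u v \<Longrightarrow> u < n \<and> v < n"
  using m_pos_adj adjV by blast

lemma common_m: "adj G w x \<Longrightarrow> adj G w y \<Longrightarrow> 0 < m x y"
proof -
  assume a: "adj G w x" "adj G w y"
  have "w \<in> {w. w < n \<and> adj G x w \<and> adj G w y}" using a adjV adj_sym by blast
  moreover have "finite {w. w < n \<and> adj G x w \<and> adj G w y}" by simp
  ultimately show ?thesis unfolding cn_def by (metis card_gt_0_iff empty_iff)
qed

lemma m_vals: "u < n \<Longrightarrow> v < n \<Longrightarrow> u \<noteq> v \<Longrightarrow> m u v = 0 \<or> m u v = r - 1"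
proof -
  assume u: "u < n" and v: "v < n" and uv: "u \<noteq> v"
  define f where "f x = real (m u x) * (real r - 1 - real (m u x))" for x
  have "(\<Sum>x<n. f x) = (real r - 1) * (\<Sum>x<n. real (m u x)) - (\<Sum>x<n. real (m u x) ^ 2)"
    unfolding f_def by (simp add: algebra_simps power2_eq_square sum_subtractf sum_distrib_left sum.distrib)
  also have "\<dots> = - real r" using sumM[OF u] S2[OF u]
    by (simp add: algebra_simps power2_eq_square power3_eq_cube)
  finally have s: "(\<Sum>x<n. f x) = - real r" .
  have fu: "f u = - real r" unfolding f_def using m_uu[OF u] by simp
  have "(\<Sum>x<n. f x) = f u + (\<Sum>x\<in>{..<n} - {u}. f x)"
    using u by (simp add: sum.remove)
  then have s0: "(\<Sum>x\<in>{..<n} - {u}. f x) = 0" using s fu by simp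
  have nn: "\<forall>x\<in>{..<n} - {u}. 0 \<le> f x"
  proof
    fix x assume x: "x \<in> {..<n} - {u}"
    then have "m u x < r" using m_lt u by auto
    then have "real (m u x) \<le> real r - 1" by linarith
    then show "0 \<le> f x" unfolding f_def by simp
  qed
  have "f v = 0" using sum_nonneg_eq_0_iff[of "{..<n} - {u}" f] s0 nn v uv by auto
  then have "real (m u v) = 0 \<or> real (m u v) = real r - 1" unfolding f_def by auto
  then show ?thesis using r2 by auto
qed

definition R where "R u = {v. v < n \<and> 0 < m u v}"

lemma fin_R[simp]: "finite (R u)" unfolding R_def by simp

lemma u_in_R: "u < n \<Longrightarrow> u \<in> R u"
  unfolding R_def using m_uu r2 by auto

lemma R_sym: "v \<in> R u \<Longrightarrow> u \<in> R v"
  unfolding R_def using m_sym m_lt_n by auto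

lemma R_val: "v \<in> R u \<Longrightarrow> u \<noteq> v \<Longrightarrow> m u v = r - 1"
proof -
  assume a: "v \<in> R u" "u \<noteq> v"
  then have p: "0 < m u v" unfolding R_def by simp
  then have "u < n" "v < n" using m_lt_n by auto
  then show ?thesis using m_vals a(2) p by fastforce
qed

lemma R_trans: "v \<in> R u \<Longrightarrow> w \<in> R v \<Longrightarrow> w \<in> R u"
proof -
  assume a: "v \<in> R u" "w \<in> R v"
  have u: "u < n" and v: "v < n" and w: "w < n" and p1: "0 < m u v" and p2: "0 < m v w"
    using a m_lt_n unfolding R_def by auto
  show "w \<in> R u"
  proof (cases "u = w")
    case True then show ?thesis using u_in_R u by simp
  next
    case False
    have "real (m u v) * real (m v w) \<le> (\<Sum>x<n. real (m u x) * real (m x w))"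
      by (rule member_le_sum) (use v in auto)
    also have "\<dots> = (real r ^ 2 + 1) * real (m u w)" using key[OF u w] False by simp
    finally have "0 < (real r ^ 2 + 1) * real (m u w)" using p1 p2
      by (smt (verit) of_nat_0_less_iff mult_pos_pos)
    then have "0 < m u w" by (simp add: zero_less_mult_iff)
    then show ?thesis using w unfolding R_def by simp
  qed
qed

lemma R_eq: "v \<in> R u \<Longrightarrow> R v = R u"
  using R_trans R_sym by blast

lemma R_disj: "x \<in> R u \<Longrightarrow> x \<in> R v \<Longrightarrow> R u = R v"
  using R_eq by metis

lemma common: "adj G w x \<Longrightarrow> adj G w y \<Longrightarrow> y \<in> R x"
  unfolding R_def using common_m adjV by blast

lemma card_R: "u < n \<Longrightarrow> card (R u) = r + 1"
proof -
  assume u: "u < n"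
  have sub: "R u \<subseteq> {..<n}" unfolding R_def by auto
  have "(\<Sum>v<n. real (m u v)) = (\<Sum>v\<in>R u. real (m u v))"
    by (rule sum.mono_neutral_right) (use sub in \<open>auto simp: R_def\<close>)
  also have "\<dots> = real (m u u) + (\<Sum>v\<in>R u - {u}. real (m u v))"
    using u_in_R[OF u] by (simp add: sum.remove)
  also have "(\<Sum>v\<in>R u - {u}. real (m u v)) = (\<Sum>v\<in>R u - {u}. real r - 1)"
    by (rule sum.cong) (use R_val r2 in auto)
  finally have "real r ^ 2 = real r + real (card (R u - {u})) * (real r - 1)"
    using sumM[OF u] m_uu[OF u] by simp
  then have "(real r - 1) * (real (card (R u - {u})) - real r) = 0"
    by (simp add: algebra_simps power2_eq_square)
  then have "real (card (R u - {u})) = real r" using r2 by simp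
  then have "card (R u - {u}) = r" by simp
  then show ?thesis using u_in_R[OF u] by (simp add: card_Diff_singleton) (metis card_Diff1_le card_gt_0_iff diff_Suc_1 empty_iff fin_R Suc_pred)
qed

end



context rg begin

lemma has_nbr: "u < n \<Longrightarrow> \<exists>v. adj G u v"
proof -
  assume u: "u < n"
  have "card (nbr u) > 0" using card_nbr[OF u] r2 by simp
  then obtain v where "v \<in> nbr u" by (metis card_gt_0_iff ex_in_conv)
  then show ?thesis unfolding nbr_def by auto
qed

definition nb where "nb u = R (SOME v. adj G u v)"

lemma nb_adj: "u < n \<Longrightarrow> adj G u v \<Longrightarrow> nb u = R v"
proof -
  assume u: "u < n" and a: "adj G u v"
  let ?v0 = "SOME v. adj G u v"
  have a0: "adj G u ?v0" using has_nbr[OF u] by (rule someI_ex)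
  have "v \<in> R ?v0" using common[OF a0 a] .
  then show ?thesis unfolding nb_def using R_eq by simp
qed

lemma nbr_sub: "u < n \<Longrightarrow> nbr u \<subseteq> nb u"
proof
  fix v assume u: "u < n" and v: "v \<in> nbr u"
  then have a: "adj G u v" unfolding nbr_def by simp
  then show "v \<in> nb u" using nb_adj[OF u a] u_in_R adjV by auto
qed

lemma nb_R: "u < n \<Longrightarrow> \<exists>v. v < n \<and> nb u = R v"
  using has_nbr nb_adj adjV by blast

lemma R_sub: "R u \<subseteq> {..<n}" unfolding R_def by auto

lemma nb_sub: "u < n \<Longrightarrow> nb u \<subseteq> {..<n}" using nb_R R_sub by metis

lemma card_nb: "u < n \<Longrightarrow> card (nb u) = r + 1" using nb_R card_R by metis

lemma fin_nb[simp]: "u < n \<Longrightarrow> finite (nb u)" using nb_R fin_R by metis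

lemma nb_cl: "u < n \<Longrightarrow> x \<in> R u \<Longrightarrow> nb x = nb u"
proof -
  assume u: "u < n" and x: "x \<in> R u"
  show ?thesis
  proof (cases "x = u")
    case False
    have "0 < m u x" using x unfolding R_def by simp
    then obtain w where w: "adj G u w" "adj G w x" using m_pos_adj by blast
    have xn: "x < n" using w adjV by blast
    show ?thesis using nb_adj[OF u w(1)] nb_adj[OF xn adj_sym[OF w(2)]] by simp
  qed simp
qed

lemma nb_nb: "u < n \<Longrightarrow> y \<in> nb u \<Longrightarrow> nb y = R u"
proof -
  assume u: "u < n" and y: "y \<in> nb u"
  obtain v where a: "adj G u v" using has_nbr[OF u] by blast
  have vn: "v < n" using a adjV by blast
  have "y \<in> R v" using y nb_adj[OF u a] by simp
  then have "nb y = nb v" using nb_cl[OF vn] by simp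
  also have "\<dots> = R u" using nb_adj[OF vn adj_sym[OF a]] .
  finally show ?thesis .
qed

lemma R_of_nb: "u < n \<Longrightarrow> y \<in> nb u \<Longrightarrow> R y = nb u"
  using nb_R R_eq by metis

lemma ct_nbr: "u < n \<Longrightarrow> nb u = R u \<Longrightarrow> nbr u = R u - {u}"
proof -
  assume u: "u < n" and c: "nb u = R u"
  have sub: "nbr u \<subseteq> R u - {u}" using nbr_sub[OF u] c adj_irr unfolding nbr_def by auto
  have "card (R u - {u}) = r" using card_R[OF u] u_in_R[OF u] by simp
  then show ?thesis using card_subset_eq[OF _ sub] card_nbr[OF u] by simp
qed

lemma nct_disj: "u < n \<Longrightarrow> nb u \<noteq> R u \<Longrightarrow> nb u \<inter> R u = {}"
proof -
  assume u: "u < n" and c: "nb u \<noteq> R u"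
  obtain v where "nb u = R v" using nb_R[OF u] by blast
  then show ?thesis using c R_disj by blast
qed

lemma nct_card: "u < n \<Longrightarrow> nb u \<noteq> R u \<Longrightarrow> card (nb u - nbr u) = 1"
proof -
  assume u: "u < n" and c: "nb u \<noteq> R u"
  have "card (nb u - nbr u) = card (nb u) - card (nbr u)"
    using nbr_sub[OF u] by (simp add: card_Diff_subset)
  then show ?thesis using card_nb[OF u] card_nbr[OF u] by simp
qed

definition phi where "phi u = the_elem (nb u - nbr u)"

lemma phi_set: "u < n \<Longrightarrow> nb u \<noteq> R u \<Longrightarrow> nb u - nbr u = {phi u}"
proof -
  assume u: "u < n" and c: "nb u \<noteq> R u"
  obtain z where "nb u - nbr u = {z}" using nct_card[OF u c] card_1_singletonE by blast
  then show ?thesis unfolding phi_def by simp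
qed

lemma nct_adj_iff: "u < n \<Longrightarrow> nb u \<noteq> R u \<Longrightarrow> adj G u y \<longleftrightarrow> (y \<in> nb u \<and> y \<noteq> phi u)"
proof -
  assume u: "u < n" and c: "nb u \<noteq> R u"
  have "y \<in> nbr u \<longleftrightarrow> (y \<in> nb u \<and> y \<noteq> phi u)" using phi_set[OF u c] nbr_sub[OF u] by blast
  then show ?thesis unfolding nbr_def using adjV by blast
qed

lemma ct_adj_iff: "u < n \<Longrightarrow> nb u = R u \<Longrightarrow> adj G u y \<longleftrightarrow> (y \<in> R u \<and> y \<noteq> u)"
proof -
  assume u: "u < n" and c: "nb u = R u"
  show ?thesis using ct_nbr[OF u c] unfolding nbr_def using adjV by blast
qed

lemma phi_props:
  assumes u: "u < n" and c: "nb u \<noteq> R u"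
  shows "phi u < n" "phi u \<in> nb u" "R (phi u) = nb u" "nb (phi u) = R u" "nb (phi u) \<noteq> R (phi u)"
    "phi (phi u) = u"
proof -
  have p: "phi u \<in> nb u" using phi_set[OF u c] by blast
  show "phi u \<in> nb u" by fact
  show pn: "phi u < n" using p nb_sub[OF u] by auto
  show r1: "R (phi u) = nb u" using R_of_nb[OF u p] .
  show r2: "nb (phi u) = R u" using nb_nb[OF u p] .
  show c2: "nb (phi u) \<noteq> R (phi u)" using r1 r2 c by simp
  have "\<not> adj G u (phi u)" using nct_adj_iff[OF u c] by simp
  then have na: "\<not> adj G (phi u) u" using adj_sym by blast
  have "u \<in> nb (phi u)" using r2 u_in_R[OF u] by simp
  then show "phi (phi u) = u" using nct_adj_iff[OF pn c2, of u] na by auto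
qed

lemma Min_ne: "u < n \<Longrightarrow> nb u \<noteq> R u \<Longrightarrow> Min (nb u) \<noteq> Min (R u)"
proof -
  assume u: "u < n" and c: "nb u \<noteq> R u"
  have "R u \<noteq> {}" using u_in_R[OF u] by blast
  moreover have "nb u \<noteq> {}" using card_nb[OF u] by auto
  ultimately have "Min (nb u) \<in> nb u" "Min (R u) \<in> R u" using fin_nb[OF u] by auto
  then show ?thesis using nct_disj[OF u c] by auto
qed

definition Vc where "Vc = {u. u < n \<and> nb u = R u}"
definition VL where "VL = {u. u < n \<and> nb u \<noteq> R u \<and> Min (R u) < Min (nb u)}"
definition VR where "VR = {u. u < n \<and> nb u \<noteq> R u \<and> Min (nb u) < Min (R u)}"

lemma V_split: "{..<n} = Vc \<union> VL \<union> VR" "Vc \<inter> VL = {}" "Vc \<inter> VR = {}" "VL \<inter> VR = {}"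
  unfolding Vc_def VL_def VR_def using Min_ne by (auto simp: linorder_neq_iff)

lemma phi_VL: "u \<in> VL \<Longrightarrow> phi u \<in> VR"
proof -
  assume a: "u \<in> VL"
  then have u: "u < n" and c: "nb u \<noteq> R u" and mi: "Min (R u) < Min (nb u)" unfolding VL_def by auto
  show ?thesis using phi_props[OF u c] mi unfolding VR_def by auto
qed

lemma phi_VR: "u \<in> VR \<Longrightarrow> phi u \<in> VL"
proof -
  assume a: "u \<in> VR"
  then have u: "u < n" and c: "nb u \<noteq> R u" and mi: "Min (nb u) < Min (R u)" unfolding VR_def by auto
  show ?thesis using phi_props[OF u c] mi unfolding VL_def by auto
qed

lemma phi_bij: "bij_betw phi VL VR"
proof (rule bij_betw_byWitness[of _ phi])
  show "\<forall>a\<in>VL. phi (phi a) = a" using phi_props unfolding VL_def by auto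
  show "\<forall>a\<in>VR. phi (phi a) = a" using phi_props unfolding VR_def by auto
  show "phi ` VL \<subseteq> VR" using phi_VL by auto
  show "phi ` VR \<subseteq> VL" using phi_VR by auto
qed

lemma Vc_closed: "u \<in> Vc \<Longrightarrow> x \<in> R u \<Longrightarrow> x \<in> Vc"
proof -
  assume u: "u \<in> Vc" and x: "x \<in> R u"
  then have un: "u < n" and c: "nb u = R u" unfolding Vc_def by auto
  have "nb x = R x" using nb_cl[OF un x] c R_eq[OF x] by simp
  then show ?thesis using x R_sub unfolding Vc_def by auto
qed

lemma VL_closed: "u \<in> VL \<Longrightarrow> x \<in> R u \<Longrightarrow> x \<in> VL"
proof -
  assume u: "u \<in> VL" and x: "x \<in> R u"
  then have un: "u < n" unfolding VL_def by auto
  have "nb x = nb u" "R x = R u" using nb_cl[OF un x] R_eq[OF x] by auto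
  then show ?thesis using u x R_sub unfolding VL_def by auto
qed

lemma trace3:
  "(\<Sum>u<n. \<Sum>v<n. real (m u v) * ind (adj G v u)) = real r * (real r - 1) * real (card Vc)"
proof -
  have "\<And>u. u < n \<Longrightarrow> (\<Sum>v<n. real (m u v) * ind (adj G v u)) = (if u \<in> Vc then real r * (real r - 1) else 0)"
  proof -
    fix u assume u: "u < n"
    have "(\<Sum>v<n. real (m u v) * ind (adj G v u)) = (\<Sum>v\<in>nbr u. real (m u v))"
    proof -
      have "(\<Sum>v<n. real (m u v) * ind (adj G v u)) = (\<Sum>v\<in>{..<n}. if v \<in> nbr u then real (m u v) else 0)"
        by (rule sum.cong) (auto simp: ind_def nbr_def adj_sym)
      also have "\<dots> = (\<Sum>v\<in>nbr u. real (m u v))"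
        by (subst sum.If_cases) (auto simp: nbr_def intro!: sum.cong)
      finally show ?thesis .
    qed
    also have "\<dots> = (if u \<in> Vc then real r * (real r - 1) else 0)"
    proof (cases "u \<in> Vc")
      case True
      then have c: "nb u = R u" unfolding Vc_def by simp
      have "(\<Sum>v\<in>nbr u. real (m u v)) = (\<Sum>v\<in>nbr u. real r - 1)"
        by (rule sum.cong) (use ct_nbr[OF u c] R_val r2 in auto)
      then show ?thesis using True card_nbr[OF u] by simp
    next
      case False
      then have c: "nb u \<noteq> R u" using u unfolding Vc_def by simp
      have "(\<Sum>v\<in>nbr u. real (m u v)) = (\<Sum>v\<in>nbr u. 0)"
      proof (rule sum.cong, simp)
        fix v assume v: "v \<in> nbr u"
        then have "v \<in> nb u" "v < n" using nbr_sub[OF u] unfolding nbr_def by auto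
        then have "v \<notin> R u" using nct_disj[OF u c] by auto
        then have "m u v = 0" using \<open>v < n\<close> unfolding R_def by simp
        then show "real (m u v) = 0" by simp
      qed
      then show ?thesis using False by simp
    qed
    finally show "(\<Sum>v<n. real (m u v) * ind (adj G v u)) = (if u \<in> Vc then real r * (real r - 1) else 0)" .
  qed
  then have "(\<Sum>u<n. \<Sum>v<n. real (m u v) * ind (adj G v u)) = (\<Sum>u<n. if u \<in> Vc then real r * (real r - 1) else 0)"
    by simp
  also have "\<dots> = real r * (real r - 1) * real (card Vc)"
  proof -
    have "Vc \<subseteq> {..<n}" unfolding Vc_def by auto
    then have "{..<n} \<inter> Vc = Vc" by auto
    then show ?thesis by (simp add: sum.If_cases)
  qed
  finally show ?thesis .
qed

end



lemma bij_family:
  assumes e: "bij_betw e {..<k} CC"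
    and en: "\<And>X. X \<in> CC \<Longrightarrow> bij_betw (en X) {..<p} X"
    and dj: "\<And>X Y. X \<in> CC \<Longrightarrow> Y \<in> CC \<Longrightarrow> X \<noteq> Y \<Longrightarrow> X \<inter> Y = {}"
  shows "bij_betw (\<lambda>(c,i). en (e c) i) ({..<k} \<times> {..<p}) (\<Union>CC)"
  unfolding bij_betw_def
proof
  have eC: "c < k \<Longrightarrow> e c \<in> CC" for c using e unfolding bij_betw_def by auto
  have mem: "c < k \<Longrightarrow> i < p \<Longrightarrow> en (e c) i \<in> e c" for c i
    using en[OF eC] unfolding bij_betw_def by auto
  show "inj_on (\<lambda>(c,i). en (e c) i) ({..<k} \<times> {..<p})"
  proof (rule inj_onI, clarify)
    fix c i c' i' assume a: "c < k" "i < p" "c' < k" "i' < p" and eq: "en (e c) i = en (e c') i'"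
    have "e c = e c'"
    proof (rule ccontr)
      assume "e c \<noteq> e c'"
      then have "e c \<inter> e c' = {}" using dj eC a by auto
      then show False using mem[of c i] mem[of c' i'] a eq by auto
    qed
    then have cc: "c = c'" using e a unfolding bij_betw_def inj_on_def by auto
    then have "i = i'" using en[OF eC[OF a(1)]] a eq unfolding bij_betw_def inj_on_def by auto
    then show "c = c' \<and> i = i'" using cc by simp
  qed
  show "(\<lambda>(c,i). en (e c) i) ` ({..<k} \<times> {..<p}) = \<Union>CC"
  proof
    show "(\<lambda>(c,i). en (e c) i) ` ({..<k} \<times> {..<p}) \<subseteq> \<Union>CC" using mem eC by auto
    show "\<Union>CC \<subseteq> (\<lambda>(c,i). en (e c) i) ` ({..<k} \<times> {..<p})"
    proof
      fix x assume "x \<in> \<Union>CC"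
      then obtain X where X: "X \<in> CC" "x \<in> X" by auto
      then obtain c where c: "c < k" "X = e c" using e unfolding bij_betw_def by auto
      then obtain i where i: "i < p" "x = en X i" using en[OF X(1)] X(2) unfolding bij_betw_def by auto
      show "x \<in> (\<lambda>(c,i). en (e c) i) ` ({..<k} \<times> {..<p})" using c i by force
    qed
  qed
qed

lemma bij_reindex:
  assumes f: "bij_betw f A B" and j: "inj_on j A" and eq: "\<And>x. x \<in> A \<Longrightarrow> \<psi> (j x) = f x"
  shows "bij_betw \<psi> (j ` A) B"
  unfolding bij_betw_def
proof
  show "inj_on \<psi> (j ` A)"
  proof (rule inj_onI, clarify)
    fix x y assume "x \<in> A" "y \<in> A" "\<psi> (j x) = \<psi> (j y)"
    then have "f x = f y" using eq by simp
    then show "j x = j y" using f \<open>x \<in> A\<close> \<open>y \<in> A\<close> unfolding bij_betw_def inj_on_def by auto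
  qed
  show "\<psi> ` j ` A = B" using f eq unfolding bij_betw_def by (auto simp: image_image)
qed

definition Fm :: "nat \<Rightarrow> (nat \<times> bool) set set" where
  "Fm r = {{(i,False),(i,True)} | i. i < r + 1}"

lemma Fm_pm: "perfect_matching (complete_bipartite (r + 1)) (Fm r)"
  unfolding perfect_matching_def
proof
  show "\<forall>e\<in>Fm r. \<exists>u v. e = {u, v} \<and> adj (complete_bipartite (r + 1)) u v"
    unfolding Fm_def adj_def complete_bipartite_def by auto
  show "\<forall>u\<in>verts (complete_bipartite (r + 1)). \<exists>!e. e \<in> Fm r \<and> u \<in> e"
  proof
    fix u assume "u \<in> verts (complete_bipartite (r + 1))"
    then obtain i b where u: "u = (i,b)" "i < r + 1" unfolding verts_def complete_bipartite_def by auto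
    show "\<exists>!e. e \<in> Fm r \<and> u \<in> e"
    proof (rule ex1I[of _ "{(i,False),(i,True)}"])
      show "{(i,False),(i,True)} \<in> Fm r \<and> u \<in> {(i,False),(i,True)}" using u unfolding Fm_def by (cases b) auto
      fix e assume "e \<in> Fm r \<and> u \<in> e"
      then show "e = {(i,False),(i,True)}" using u unfolding Fm_def by auto
    qed
  qed
qed

definition Ht :: "nat \<Rightarrow> nat \<Rightarrow> nat \<Rightarrow> ((nat \<times> nat) + (nat \<times> nat \<times> bool)) graph" where
  "Ht g h r = disj_union (copies g (complete_graph (r + 1)))
                          (copies h (delete_edges (complete_bipartite (r + 1)) (Fm r)))"

lemma verts_Ht: "verts (Ht g h r) = Inl ` ({..<g} \<times> {..<r+1}) \<union>
   (\<lambda>(d,i). Inr (d,(i,False))) ` ({..<h} \<times> {..<r+1}) \<union> (\<lambda>(d,i). Inr (d,(i,True))) ` ({..<h} \<times> {..<r+1})"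
proof -
  have "verts (Ht g h r) = Inl ` ({..<g} \<times> {..<r+1}) \<union> Inr ` ({..<h} \<times> ({..<r+1} \<times> UNIV))"
    unfolding Ht_def disj_union_def copies_def verts_def complete_graph_def delete_edges_def complete_bipartite_def
    by simp
  also have "Inr ` ({..<h} \<times> ({..<r+1} \<times> UNIV)) = (\<lambda>(d,i). Inr (d,(i,False))) ` ({..<h} \<times> {..<r+1}) \<union> (\<lambda>(d,i). Inr (d,(i,True))) ` ({..<h} \<times> {..<r+1})"
    by (auto simp: image_iff)
  finally show ?thesis by (simp add: Un_assoc)
qed

lemma adj_Ht:
  "adj (Ht g h r) (Inl (c,i)) (Inl (c',j)) \<longleftrightarrow> c < g \<and> c' < g \<and> i < r+1 \<and> j < r+1 \<and> c = c' \<and> i \<noteq> j"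
  "\<not> adj (Ht g h r) (Inl x) (Inr y)"
  "\<not> adj (Ht g h r) (Inr y) (Inl x)"
  "adj (Ht g h r) (Inr (d,(i,b))) (Inr (d',(j,b'))) \<longleftrightarrow> d < h \<and> d' < h \<and> i < r+1 \<and> j < r+1 \<and> d = d' \<and> b \<noteq> b' \<and> i \<noteq> j"
proof -
  show "adj (Ht g h r) (Inl (c,i)) (Inl (c',j)) \<longleftrightarrow> c < g \<and> c' < g \<and> i < r+1 \<and> j < r+1 \<and> c = c' \<and> i \<noteq> j"
    unfolding Ht_def disj_union_def copies_def verts_def complete_graph_def adj_def by auto
  show "\<not> adj (Ht g h r) (Inl x) (Inr y)" "\<not> adj (Ht g h r) (Inr y) (Inl x)"
    unfolding Ht_def disj_union_def adj_def by auto
  have F: "b \<noteq> b' \<Longrightarrow> ({(i,b),(j,b')} \<in> Fm r) \<longleftrightarrow> (i = j \<and> i < r + 1)"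
    unfolding Fm_def by (cases b; cases b') (auto simp: doubleton_eq_iff)
  show "adj (Ht g h r) (Inr (d,(i,b))) (Inr (d',(j,b'))) \<longleftrightarrow> d < h \<and> d' < h \<and> i < r+1 \<and> j < r+1 \<and> d = d' \<and> b \<noteq> b' \<and> i \<noteq> j"
    unfolding Ht_def disj_union_def copies_def verts_def complete_bipartite_def delete_edges_def adj_def
    using F by auto
qed




context rg begin

definition Cc where "Cc = R ` Vc"
definition Lc where "Lc = R ` VL"

lemma Union_Cc: "\<Union>Cc = Vc"
  unfolding Cc_def using Vc_closed u_in_R unfolding Vc_def by blast

lemma Union_Lc: "\<Union>Lc = VL"
  unfolding Lc_def using VL_closed u_in_R unfolding VL_def by blast

lemma fin_Cc: "finite Cc" unfolding Cc_def Vc_def by simp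
lemma fin_Lc: "finite Lc" unfolding Lc_def VL_def by simp

lemma cls_disj: "X \<in> R ` S \<Longrightarrow> Y \<in> R ` S \<Longrightarrow> X \<noteq> Y \<Longrightarrow> X \<inter> Y = {}"
  using R_disj by blast

definition enum where "enum X = (SOME f. bij_betw f {..<r+1} X)"

lemma enum_bij: "u < n \<Longrightarrow> bij_betw (enum (R u)) {..<r+1} (R u)"
proof -
  assume u: "u < n"
  obtain f where "bij_betw f {0..<card (R u)} (R u)" using ex_bij_betw_nat_finite fin_R by blast
  then have "\<exists>f. bij_betw f {..<r+1} (R u)" using card_R[OF u] by (auto simp: atLeast0LessThan)
  then show ?thesis unfolding enum_def by (rule someI_ex)
qed

definition ec where "ec = (SOME f. bij_betw f {..<card Cc} Cc)"
definition el where "el = (SOME f. bij_betw f {..<card Lc} Lc)"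

lemma ec_bij: "bij_betw ec {..<card Cc} Cc"
proof -
  obtain f where "bij_betw f {0..<card Cc} Cc" using ex_bij_betw_nat_finite fin_Cc by blast
  then have "\<exists>f. bij_betw f {..<card Cc} Cc" by (auto simp: atLeast0LessThan)
  then show ?thesis unfolding ec_def by (rule someI_ex)
qed

lemma el_bij: "bij_betw el {..<card Lc} Lc"
proof -
  obtain f where "bij_betw f {0..<card Lc} Lc" using ex_bij_betw_nat_finite fin_Lc by blast
  then have "\<exists>f. bij_betw f {..<card Lc} Lc" by (auto simp: atLeast0LessThan)
  then show ?thesis unfolding el_def by (rule someI_ex)
qed

abbreviation g0 where "g0 \<equiv> card Cc"
abbreviation h0 where "h0 \<equiv> card Lc"

definition psi1 where "psi1 = (\<lambda>(c,i). enum (ec c) i)"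
definition psi2 where "psi2 = (\<lambda>(d,i). enum (el d) i)"

lemma psi1_bij: "bij_betw psi1 ({..<g0} \<times> {..<r+1}) Vc"
  unfolding psi1_def Union_Cc[symmetric]
proof (rule bij_family[OF ec_bij])
  fix X assume "X \<in> Cc"
  then obtain u where "u \<in> Vc" "X = R u" unfolding Cc_def by auto
  then show "bij_betw (enum X) {..<r+1} X" using enum_bij unfolding Vc_def by auto
qed (use cls_disj in \<open>auto simp: Cc_def\<close>)

lemma psi2_bij: "bij_betw psi2 ({..<h0} \<times> {..<r+1}) VL"
  unfolding psi2_def Union_Lc[symmetric]
proof (rule bij_family[OF el_bij])
  fix X assume "X \<in> Lc"
  then obtain u where "u \<in> VL" "X = R u" unfolding Lc_def by auto
  then show "bij_betw (enum X) {..<r+1} X" using enum_bij unfolding VL_def by auto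
qed (use cls_disj in \<open>auto simp: Lc_def\<close>)

lemma psi3_bij: "bij_betw (\<lambda>p. phi (psi2 p)) ({..<h0} \<times> {..<r+1}) VR"
  using bij_betw_trans[OF psi2_bij phi_bij] by (simp add: comp_def)

lemma R_psi1: "c < g0 \<Longrightarrow> i < r + 1 \<Longrightarrow> R (psi1 (c,i)) = ec c"
proof -
  assume c: "c < g0" and i: "i < r + 1"
  have "ec c \<in> Cc" using ec_bij c unfolding bij_betw_def by auto
  then obtain u where u: "u \<in> Vc" "ec c = R u" unfolding Cc_def by auto
  have "psi1 (c,i) \<in> R u" using enum_bij[of u] u i unfolding psi1_def bij_betw_def Vc_def by auto
  then show ?thesis using R_eq u by simp
qed

lemma R_psi2: "d < h0 \<Longrightarrow> i < r + 1 \<Longrightarrow> R (psi2 (d,i)) = el d"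
proof -
  assume c: "d < h0" and i: "i < r + 1"
  have "el d \<in> Lc" using el_bij c unfolding bij_betw_def by auto
  then obtain u where u: "u \<in> VL" "el d = R u" unfolding Lc_def by auto
  have "psi2 (d,i) \<in> R u" using enum_bij[of u] u i unfolding psi2_def bij_betw_def VL_def by auto
  then show ?thesis using R_eq u by simp
qed

lemma Vc_adj: "x \<in> Vc \<Longrightarrow> adj G x y \<longleftrightarrow> y \<in> R x \<and> y \<noteq> x"
  using ct_adj_iff unfolding Vc_def by auto

lemma Vc_nadj: "x \<in> Vc \<Longrightarrow> y \<notin> Vc \<Longrightarrow> \<not> adj G x y"
  using Vc_adj Vc_closed by blast

lemma VL_adj: "x \<in> VL \<Longrightarrow> adj G x y \<Longrightarrow> y \<in> VR"
proof -
  assume x: "x \<in> VL" and a: "adj G x y"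
  then have xn: "x < n" and c: "nb x \<noteq> R x" and mi: "Min (R x) < Min (nb x)" unfolding VL_def by auto
  have y: "y \<in> nb x" using nbr_sub[OF xn] a unfolding nbr_def using adjV by blast
  have "R y = nb x" "nb y = R x" using R_of_nb[OF xn y] nb_nb[OF xn y] by auto
  then show ?thesis using c mi y nb_sub[OF xn] unfolding VR_def by auto
qed

lemma VR_adj: "x \<in> VR \<Longrightarrow> adj G x y \<Longrightarrow> y \<in> VL"
proof -
  assume x: "x \<in> VR" and a: "adj G x y"
  then have xn: "x < n" and c: "nb x \<noteq> R x" and mi: "Min (nb x) < Min (R x)" unfolding VR_def by auto
  have y: "y \<in> nb x" using nbr_sub[OF xn] a unfolding nbr_def using adjV by blast
  have "R y = nb x" "nb y = R x" using R_of_nb[OF xn y] nb_nb[OF xn y] by auto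
  then show ?thesis using c mi y nb_sub[OF xn] unfolding VL_def by auto
qed

lemma VL_phi_adj: "x \<in> VL \<Longrightarrow> x' \<in> VL \<Longrightarrow> adj G x (phi x') \<longleftrightarrow> R x = R x' \<and> x \<noteq> x'"
proof -
  assume x: "x \<in> VL" and x': "x' \<in> VL"
  then have xn: "x < n" and c: "nb x \<noteq> R x" and xn': "x' < n" and c': "nb x' \<noteq> R x'"
    unfolding VL_def by auto
  note P = phi_props[OF xn c] and P' = phi_props[OF xn' c']
  show ?thesis
  proof
    assume a: "adj G x (phi x')"
    then have "phi x' \<in> nb x" "phi x' \<noteq> phi x" using nct_adj_iff[OF xn c] by auto
    then have "R x = R x'" using nb_nb[OF xn] P'(4) by metis
    moreover have "x \<noteq> x'" using \<open>phi x' \<noteq> phi x\<close> by auto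
    ultimately show "R x = R x' \<and> x \<noteq> x'" by simp
  next
    assume a: "R x = R x' \<and> x \<noteq> x'"
    then have "x' \<in> R x" using u_in_R[OF xn'] by simp
    then have "nb x' = nb x" using nb_cl[OF xn] by simp
    then have "phi x' \<in> nb x" using P'(2) by simp
    moreover have "phi x' \<noteq> phi x" using a P(6) P'(6) by metis
    ultimately show "adj G x (phi x')" using nct_adj_iff[OF xn c] by auto
  qed
qed

definition psi where
  "psi = case_sum psi1 (\<lambda>(d,(i,b)). if b then phi (psi2 (d,i)) else psi2 (d,i))"

lemma psi_bij: "bij_betw psi (verts (Ht g0 h0 r)) {..<n}"
proof -
  have b1: "bij_betw psi (Inl ` ({..<g0} \<times> {..<r+1})) Vc"
    by (rule bij_reindex[OF psi1_bij]) (auto simp: psi_def)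
  have b2: "bij_betw psi ((\<lambda>(d,i). Inr (d,(i,False))) ` ({..<h0} \<times> {..<r+1})) VL"
    by (rule bij_reindex[OF psi2_bij]) (auto simp: psi_def inj_on_def)
  have b3: "bij_betw psi ((\<lambda>(d,i). Inr (d,(i,True))) ` ({..<h0} \<times> {..<r+1})) VR"
    by (rule bij_reindex[OF psi3_bij]) (auto simp: psi_def inj_on_def)
  have "bij_betw psi (verts (Ht g0 h0 r)) (Vc \<union> VL \<union> VR)"
    unfolding verts_Ht
    by (intro bij_betw_combine b1 b2 b3) (use V_split in auto)
  then show ?thesis using V_split(1) by simp
qed

lemma psi_adj:
  assumes p: "p \<in> verts (Ht g0 h0 r)" and q: "q \<in> verts (Ht g0 h0 r)"
  shows "adj (Ht g0 h0 r) p q \<longleftrightarrow> adj G (psi p) (psi q)"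
proof -
  have m1: "c < g0 \<Longrightarrow> i < r+1 \<Longrightarrow> psi1 (c,i) \<in> Vc" for c i using psi1_bij unfolding bij_betw_def by auto
  have m2: "d < h0 \<Longrightarrow> i < r+1 \<Longrightarrow> psi2 (d,i) \<in> VL" for d i using psi2_bij unfolding bij_betw_def by auto
  have m3: "d < h0 \<Longrightarrow> i < r+1 \<Longrightarrow> phi (psi2 (d,i)) \<in> VR" for d i using psi3_bij unfolding bij_betw_def by auto
  have i1: "c < g0 \<Longrightarrow> i < r+1 \<Longrightarrow> c' < g0 \<Longrightarrow> j < r+1 \<Longrightarrow> psi1 (c,i) = psi1 (c',j) \<longleftrightarrow> c = c' \<and> i = j"
    for c i c' j using psi1_bij unfolding bij_betw_def inj_on_def by blast
  have i2: "d < h0 \<Longrightarrow> i < r+1 \<Longrightarrow> d' < h0 \<Longrightarrow> j < r+1 \<Longrightarrow> psi2 (d,i) = psi2 (d',j) \<longleftrightarrow> d = d' \<and> i = j"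
    for d i d' j using psi2_bij unfolding bij_betw_def inj_on_def by blast
  have ecinj: "c < g0 \<Longrightarrow> c' < g0 \<Longrightarrow> ec c = ec c' \<longleftrightarrow> c = c'" for c c'
    using ec_bij unfolding bij_betw_def inj_on_def by blast
  have elinj: "d < h0 \<Longrightarrow> d' < h0 \<Longrightarrow> el d = el d' \<longleftrightarrow> d = d'" for d d'
    using el_bij unfolding bij_betw_def inj_on_def by blast
  have VcVL: "x \<in> VL \<Longrightarrow> x \<notin> Vc" "x \<in> VR \<Longrightarrow> x \<notin> Vc" "x \<in> VL \<Longrightarrow> x \<notin> VR" for x
    using V_split by auto
  show ?thesis
  proof (cases p)
    case (Inl pc)
    obtain c i where pc: "p = Inl (c,i)" "c < g0" "i < r+1" using p Inl unfolding verts_Ht by auto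
    show ?thesis
    proof (cases q)
      case (Inl qc)
      obtain c' j where qc: "q = Inl (c',j)" "c' < g0" "j < r+1" using q Inl unfolding verts_Ht by auto
      have x: "psi1 (c,i) \<in> Vc" using m1 pc by auto
      have "psi1 (c',j) \<in> R (psi1 (c,i)) \<longleftrightarrow> c = c'"
      proof
        assume a: "psi1 (c',j) \<in> R (psi1 (c,i))"
        have "psi1 (c',j) \<in> R (psi1 (c',j))" using u_in_R m1 qc unfolding Vc_def by auto
        then have "R (psi1 (c,i)) = R (psi1 (c',j))" using a R_disj by blast
        then show "c = c'" using R_psi1 pc qc ecinj by metis
      next
        assume "c = c'"
        then show "psi1 (c',j) \<in> R (psi1 (c,i))" using R_psi1 pc qc u_in_R m1 unfolding Vc_def by (metis (mono_tags, lifting) mem_Collect_eq)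
      qed
      then show ?thesis using Vc_adj[OF x] i1 pc qc adj_Ht(1) by (auto simp: psi_def)
    next
      case (Inr qd)
      obtain d j b where qd: "q = Inr (d,(j,b))" "d < h0" "j < r+1" using q Inr unfolding verts_Ht by auto
      have x: "psi1 (c,i) \<in> Vc" using m1 pc by auto
      have "psi q \<notin> Vc" using qd m2 m3 VcVL by (cases b) (auto simp: psi_def)
      then show ?thesis using Vc_nadj[OF x] pc qd adj_Ht(2) by (auto simp: psi_def)
    qed
  next
    case (Inr pd)
    obtain d i b where pd: "p = Inr (d,(i,b))" "d < h0" "i < r+1" using p Inr unfolding verts_Ht by auto
    show ?thesis
    proof (cases q)
      case (Inl qc)
      obtain c' j where qc: "q = Inl (c',j)" "c' < g0" "j < r+1" using q Inl unfolding verts_Ht by auto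
      have x: "psi1 (c',j) \<in> Vc" using m1 qc by auto
      have "psi p \<notin> Vc" using pd m2 m3 VcVL by (cases b) (auto simp: psi_def)
      then have "\<not> adj G (psi q) (psi p)" using Vc_nadj[OF x] qc by (auto simp: psi_def)
      then show ?thesis using adj_sym pd qc adj_Ht(3) by blast
    next
      case (Inr qd)
      obtain d' j b' where qd: "q = Inr (d',(j,b'))" "d' < h0" "j < r+1" using q Inr unfolding verts_Ht by auto
      have H: "adj (Ht g0 h0 r) p q \<longleftrightarrow> d = d' \<and> b \<noteq> b' \<and> i \<noteq> j" using adj_Ht(4) pd qd by auto
      have x: "psi2 (d,i) \<in> VL" "phi (psi2 (d,i)) \<in> VR" using m2 m3 pd by auto
      have y: "psi2 (d',j) \<in> VL" "phi (psi2 (d',j)) \<in> VR" using m2 m3 qd by auto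
      have key1: "adj G (psi2 (d,i)) (phi (psi2 (d',j))) \<longleftrightarrow> d = d' \<and> i \<noteq> j"
        using VL_phi_adj[OF x(1) y(1)] R_psi2 pd qd elinj i2 by auto
      have key2: "adj G (psi2 (d',j)) (phi (psi2 (d,i))) \<longleftrightarrow> d = d' \<and> i \<noteq> j"
        using VL_phi_adj[OF y(1) x(1)] R_psi2 pd qd elinj i2 by auto
      show ?thesis
      proof (cases b)
        case True
        show ?thesis
        proof (cases b')
          case True
          then show ?thesis using H pd qd \<open>b\<close> VR_adj[OF x(2)] VcVL(3)[OF y(1)] VcVL y
            by (auto simp: psi_def)
        next
          case False
          then show ?thesis using H pd qd \<open>b\<close> key2 adj_sym by (auto simp: psi_def)
        qed
      next
        case False
        show ?thesis
        proof (cases b')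
          case True
          then show ?thesis using H pd qd \<open>\<not> b\<close> key1 by (auto simp: psi_def)
        next
          case False
          then show ?thesis using H pd qd \<open>\<not> b\<close> VL_adj[OF x(1)] VcVL(3)[OF y(1)]
            by (auto simp: psi_def)
        qed
      qed
    qed
  qed
qed

lemma iso: "graph_iso G (Ht g0 h0 r)"
  unfolding graph_iso_def
proof (intro exI conjI)
  let ?f = "inv_into (verts (Ht g0 h0 r)) psi"
  have vG: "verts G = {..<n}" using V .
  show "bij_betw ?f (verts G) (verts (Ht g0 h0 r))" unfolding vG by (rule bij_betw_inv_into[OF psi_bij])
  show "\<forall>u\<in>verts G. \<forall>v\<in>verts G. adj G u v = adj (Ht g0 h0 r) (?f u) (?f v)"
  proof (intro ballI)
    fix u v assume u: "u \<in> verts G" and v: "v \<in> verts G"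
    have fu: "?f u \<in> verts (Ht g0 h0 r)" "psi (?f u) = u"
      using bij_betw_inv_into[OF psi_bij] bij_betw_inv_into_right[OF psi_bij] u vG unfolding bij_betw_def by auto
    have fv: "?f v \<in> verts (Ht g0 h0 r)" "psi (?f v) = v"
      using bij_betw_inv_into[OF psi_bij] bij_betw_inv_into_right[OF psi_bij] v vG unfolding bij_betw_def by auto
    show "adj G u v = adj (Ht g0 h0 r) (?f u) (?f v)" using psi_adj[OF fu(1) fv(1)] fu(2) fv(2) by simp
  qed
qed

lemma card_counts: "card Vc = g0 * (r + 1)" "card VL = h0 * (r + 1)" "card VR = h0 * (r + 1)"
  using bij_betw_same_card[OF psi1_bij] bij_betw_same_card[OF psi2_bij] bij_betw_same_card[OF psi3_bij]
  by (auto simp: card_cartesian_product)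

lemma n_count: "n = (g0 + 2 * h0) * (r + 1)"
proof -
  have "n = card (Vc \<union> VL \<union> VR)" using V_split(1) by (metis card_lessThan)
  also have "\<dots> = card Vc + card VL + card VR"
    using V_split by (simp add: card_Un_disjoint Int_Un_distrib2 Vc_def VL_def VR_def)
  finally show ?thesis using card_counts by (simp add: algebra_simps)
qed

end



lemma cn_ind: "real (cn G n u v) = (\<Sum>w<n. ind (adj G u w) * ind (adj G w v))"
proof -
  have "(\<Sum>w<n. ind (adj G u w) * ind (adj G w v)) = (\<Sum>w<n. ind (adj G u w \<and> adj G w v))"
    unfolding ind_def by (intro sum.cong) auto
  also have "\<dots> = real (card {w \<in> {..<n}. adj G u w \<and> adj G w v})" by (rule sum_ind) simp
  also have "{w \<in> {..<n}. adj G u w \<and> adj G w v} = {w. w < n \<and> adj G u w \<and> adj G w v}" by auto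
  finally show ?thesis unfolding cn_def by simp
qed

theorem mainTheorem4:
  fixes G :: "nat graph" and n r a b s s' :: nat
  assumes "simple_graph G"
    and "verts G = {..<n}"
    and "r \<ge> 2"
    and "regular G r"
    and "\<not> connected G"
    and "has_spectrum (signless_laplacian G n)
           (replicate_mset s' (2 * real r) + replicate_mset (s - s') 0
            + replicate_mset a (real r + 1) + replicate_mset b (real r - 1))"
    and "n = s + a + b"
    and "s > s'" and "s' > 1"
  shows "s \<le> 2 * s' \<and> a = r * (s - s') \<and> b = r * s' \<and> real r = real n / real s - 1 \<and>
         (\<exists>F. perfect_matching (complete_bipartite (r + 1)) F \<and>
            graph_iso G
              (disj_union (copies (2 * s' - s) (complete_graph (r + 1)))
                          (copies (s - s') (delete_edges (complete_bipartite (r + 1)) F))))"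
proof -
  note sg = assms(1) and V = assms(2) and r2 = assms(3) and reg = assms(4) and sp = assms(6)
    and ns = assms(7) and ss = assms(8)
  define Ms :: "real multiset" where "Ms = replicate_mset s' (2 * real r) + replicate_mset (s - s') 0
            + replicate_mset a (real r + 1) + replicate_mset b (real r - 1)"
  define A :: "real mat" where "A = mat n n (\<lambda>(i,j). ind (adj G i j))"
  have Ac: "A \<in> carrier_mat n n" unfolding A_def by simp
  have adjV: "adj G u v \<Longrightarrow> u < n \<and> v < n" for u v using V unfolding adj_def verts_def by auto
  have degr: "u < n \<Longrightarrow> degree G u = r" for u using reg V unfolding regular_def by auto
  have irr: "\<not> adj G u u" for u using sg unfolding simple_graph_def by blast
  have asym: "adj G u v = adj G v u" for u v using sg unfolding simple_graph_def by blast
  have Leq: "signless_laplacian G n = A + real r \<cdot>\<^sub>m 1\<^sub>m n"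
    by (rule eq_matI) (auto simp: signless_laplacian_def A_def degr ind_def irr)
  have szM: "size Ms = n" unfolding Ms_def using ns ss by simp
  obtain es where es: "mset es = Ms" and cp: "char_poly (A + real r \<cdot>\<^sub>m 1\<^sub>m n) = (\<Prod>e\<leftarrow>es. [:-e,1:])"
    using char_poly_split[OF _ sp[folded Ms_def] szM] Leq Ac by (metis add_carrier_mat one_carrier_mat smult_carrier_mat)
  have roots: "(e - real r)^4 + (-(real r^2+1))*(e - real r)^2 + real r^2 = 0" if e: "e \<in> set es" for e
  proof -
    have "e \<in># Ms" using e es by (metis set_mset_mset)
    then have "e = 2 * real r \<or> e = 0 \<or> e = real r + 1 \<or> e = real r - 1"
      unfolding Ms_def by (auto split: if_splits)
    then have "e - real r = real r \<or> e - real r = - real r \<or> e - real r = 1 \<or> e - real r = -1" by auto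
    moreover have "\<And>d. d = real r \<or> d = - real r \<or> d = 1 \<or> d = -1 \<Longrightarrow> d^4 + (-(real r^2+1))*d^2 + real r^2 = 0"
      by (auto simp: algebra_simps power2_eq_square power4_eq_xxxx)
    ultimately show ?thesis by blast
  qed
  have symA: "i < n \<Longrightarrow> j < n \<Longrightarrow> A $$ (i,j) = A $$ (j,i)" for i j unfolding A_def using asym by simp
  have SF1: "((A*A)*(A*A)) $$ (i,j) + (-(real r^2+1)) * (A*A) $$ (i,j) + real r^2 * (if i = j then 1 else 0) = 0"
    if "i < n" "j < n" for i j
    using spectral_facts(1)[of A n "real r" es "-(real r^2+1)" "real r^2" i j] Ac symA cp roots that by blast
  have SF2: "trc (A ^\<^sub>m k) = (\<Sum>e\<leftarrow>es. (e - real r)^k)" for k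
    using spectral_facts(2)[of A n "real r" es "-(real r^2+1)" "real r^2" k] Ac symA cp roots by blast
  have AA: "i < n \<Longrightarrow> j < n \<Longrightarrow> (A * A) $$ (i,j) = real (cn G n i j)" for i j
  proof -
    assume ij: "i < n" "j < n"
    have Ae: "k < n \<Longrightarrow> l < n \<Longrightarrow> A $$ (k,l) = ind (adj G k l)" for k l unfolding A_def by simp
    show ?thesis unfolding mult_entry[OF Ac Ac ij] cn_ind using ij Ae by (intro sum.cong) auto
  qed
  have AAAA: "i < n \<Longrightarrow> j < n \<Longrightarrow> ((A * A) * (A * A)) $$ (i,j) = (\<Sum>w<n. real (cn G n i w) * real (cn G n w j))" for i j
  proof -
    assume ij: "i < n" "j < n"
    have AAc: "A * A \<in> carrier_mat n n" using Ac by simp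
    show ?thesis unfolding mult_entry[OF AAc AAc ij] using ij AA by (intro sum.cong) auto
  qed
  interpret rg G n r
  proof
    show "simple_graph G" "verts G = {..<n}" "r \<ge> 2" "regular G r" by fact+
    fix u v assume u: "u < n" and v: "v < n"
    have "((A*A)*(A*A)) $$ (u,v) + (-(real r^2+1)) * (A*A) $$ (u,v) + real r^2 * (if u = v then 1 else 0) = 0"
      using SF1[OF u v] .
    then show "(\<Sum>w<n. real (cn G n u w) * real (cn G n w v)) =
        (real r ^ 2 + 1) * real (cn G n u v) - (if u = v then real r ^ 2 else 0)"
      using AAAA[OF u v] AA[OF u v] by (auto simp: algebra_simps split: if_splits)
  qed
  have sumes: "(\<Sum>e\<leftarrow>es. f e) = real s' * f (2 * real r) + real (s - s') * f 0 + real a * f (real r + 1) + real b * f (real r - 1)" for f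
  proof -
    have "(\<Sum>e\<leftarrow>es. f e) = sum_mset (image_mset f (mset es))" by (simp only: mset_map[symmetric] sum_mset_sum_list)
    then show ?thesis unfolding es Ms_def by simp
  qed
  have p1: "A ^\<^sub>m 1 = A" using Ac by simp
  have p2: "A ^\<^sub>m 2 = A * A" using Ac by (simp add: numeral_2_eq_2)
  have p3: "A ^\<^sub>m 3 = (A * A) * A" using Ac by (simp add: numeral_3_eq_3)
  have t1: "trc (A ^\<^sub>m 1) = 0" unfolding p1 trc_def using Ac by (simp add: A_def ind_def irr)
  have t2: "trc (A ^\<^sub>m 2) = real n * real r" unfolding p2 trc_def using Ac AA m_uu by simp
  have t3: "trc (A ^\<^sub>m 3) = real r * (real r - 1) * real (card Vc)"
  proof -
    have AAc: "A * A \<in> carrier_mat n n" using Ac by simp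
    have Ae: "k < n \<Longrightarrow> l < n \<Longrightarrow> A $$ (k,l) = ind (adj G k l)" for k l unfolding A_def by simp
    have "trc (A ^\<^sub>m 3) = (\<Sum>u<n. ((A * A) * A) $$ (u,u))" unfolding p3 trc_def using Ac by simp
    also have "\<dots> = (\<Sum>u<n. \<Sum>v<n. real (cn G n u v) * ind (adj G v u))"
    proof (rule sum.cong, simp)
      fix u assume u: "u \<in> {..<n}"
      show "((A * A) * A) $$ (u,u) = (\<Sum>v<n. real (cn G n u v) * ind (adj G v u))"
      proof -
        have u': "u < n" using u by simp
        show ?thesis unfolding mult_entry[OF AAc Ac u' u'] using u' AA Ae by (auto intro!: sum.cong)
      qed
    qed
    finally have "trc (A ^\<^sub>m 3) = (\<Sum>u<n. \<Sum>v<n. real (cn G n u v) * ind (adj G v u))" .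
    then show ?thesis using trace3 by simp
  qed
  have E1: "0 = real s' * real r - real (s - s') * real r + real a - real b"
    using SF2[of 1] t1 sumes[of "\<lambda>e. (e - real r)^1"] by simp
  have E2: "real n * real r = real s' * real r ^ 2 + real (s - s') * real r ^ 2 + real a + real b"
    using SF2[of 2] t2 sumes[of "\<lambda>e. (e - real r)^2"] by (simp add: power2_eq_square)
  have E3: "real r * (real r - 1) * real (card Vc) = real s' * real r ^ 3 - real (s - s') * real r ^ 3 + real a - real b"
    using SF2[of 3] t3 sumes[of "\<lambda>e. (e - real r)^3"] by (simp add: power3_eq_cube)
  have rr: "real r \<ge> 2" using r2 by simp
  have sl: "real (s - s') = real s - real s'" using ss by simp
  have Vcc: "real (card Vc) = real g0 * (real r + 1)" using card_counts(1) by (simp add: algebra_simps)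
  have nc: "real n = (real g0 + 2 * real h0) * (real r + 1)"
  proof -
    have "real n = real ((g0 + 2 * h0) * (r + 1))" using n_count by (simp only:)
    then show ?thesis by (simp add: algebra_simps)
  qed
  have ns': "real n = real s + real a + real b" using ns by simp
  have i1: "real n * (real r - 1) = (real s * (real r + 1)) * (real r - 1)"
    using E2 ns' sl by (simp add: algebra_simps power2_eq_square)
  have Ns: "real n = real s * (real r + 1)" using i1 rr by simp
  have i2: "(real g0) * (real r * (real r - 1) * (real r + 1)) = (2 * real s' - real s) * (real r * (real r - 1) * (real r + 1))"
    using E3 E1 Vcc sl by (simp add: algebra_simps power3_eq_cube)
  have pos: "real r * (real r - 1) * (real r + 1) \<noteq> 0" using rr by simp
  have G0: "real g0 = 2 * real s' - real s" using i2 pos by simp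
  have H0: "real h0 = real s - real s'"
  proof -
    have "(real s) * (real r + 1) = (real g0 + 2 * real h0) * (real r + 1)" using Ns nc by simp
    then have "real s = real g0 + 2 * real h0" using rr by simp
    then show ?thesis using G0 by simp
  qed
  have ab1: "real a - real b = real r * (real s - 2 * real s')" using E1 sl by (simp add: algebra_simps)
  have ab2: "real a + real b = real r * real s" using Ns ns' by (simp add: algebra_simps)
  have ra: "real a = real r * (real s - real s')" using ab1 ab2 by (simp add: algebra_simps)
  have rb: "real b = real r * real s'" using ab1 ab2 by (simp add: algebra_simps)
  have c1: "s \<le> 2 * s'" using G0 by simp
  have c2: "a = r * (s - s')" using ra sl by (metis of_nat_eq_iff of_nat_mult)
  have c3: "b = r * s'" using rb by (metis of_nat_eq_iff of_nat_mult)
  have c4: "real r = real n / real s - 1" using Ns ss by (simp add: field_simps)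
  have g0e: "g0 = 2 * s' - s" using G0 c1 by (simp add: of_nat_diff)
  have h0e: "h0 = s - s'" using H0 sl by simp
  have "graph_iso G (Ht (2 * s' - s) (s - s') r)" using iso g0e h0e by simp
  then show ?thesis using c1 c2 c3 c4 Fm_pm[of r] unfolding Ht_def by blast
qed



end
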